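(* Let $G=(V,E)$ be a graph and let $S$ be an optimal edge-irregulator of $G$. Then for every edge $e\in S$ there exists an edge $uv\in E$ with $d_G(u)=d_G(v)$ such that $e$ is at distance at most $2|S|-1$ from $uv$.
   Context: All graphs are finite and simple; $d_G(x)$ is the degree of $x$ in $G$. A graph is locally irregular if no two adjacent vertices have the same degree. An edge-irregulator of $G$ is a set $S\subseteq E(G)$ such that $G-S$ is locally irregular; it is optimal if it has minimum cardinality among all edge-irregulators of $G$. The distance between two edges is the minimum distance in $G$ between an endpoint of one and an endpoint of the other. *)

theory Defs
  imports Main
begin

definition simple_graph :: "'a set \<Rightarrow> 'a set set \<Rightarrow> bool" where
  "simple_graph V E \<longleftrightarrow> finite V \<and> (\<forall>e\<in>E. \<exists>u v. u \<in> V \<and> v \<in> V \<and> u \<noteq> v \<and> e = {u, v})"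

definition deg :: "'a set set \<Rightarrow> 'a \<Rightarrow> nat" where
  "deg E x = card {e \<in> E. x \<in> e}"

definition locally_irregular :: "'a set set \<Rightarrow> bool" where
  "locally_irregular E \<longleftrightarrow> (\<forall>u v. {u, v} \<in> E \<longrightarrow> u \<noteq> v \<longrightarrow> deg E u \<noteq> deg E v)"

definition edge_irregulator :: "'a set set \<Rightarrow> 'a set set \<Rightarrow> bool" where
  "edge_irregulator E S \<longleftrightarrow> S \<subseteq> E \<and> locally_irregular (E - S)"

definition optimal_edge_irregulator :: "'a set set \<Rightarrow> 'a set set \<Rightarrow> bool" where
  "optimal_edge_irregulator E S \<longleftrightarrow> edge_irregulator E S \<and>
     (\<forall>S'. edge_irregulator E S' \<longrightarrow> card S \<le> card S')"

definition dist_le :: "'a set set \<Rightarrow> 'a \<Rightarrow> 'a \<Rightarrow> nat \<Rightarrow> bool" where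
  "dist_le E x y k \<longleftrightarrow> (\<exists>p. p \<noteq> [] \<and> hd p = x \<and> last p = y \<and> length p \<le> k + 1 \<and>
      (\<forall>i < length p - 1. {p ! i, p ! Suc i} \<in> E))"

definition edge_dist_le :: "'a set set \<Rightarrow> 'a set \<Rightarrow> 'a set \<Rightarrow> nat \<Rightarrow> bool" where
  "edge_dist_le E e f k \<longleftrightarrow> (\<exists>x\<in>e. \<exists>y\<in>f. dist_le E x y k)"

end

theory Submission
  imports Defs
begin

lemma dist_le_refl: "dist_le E x x 0"
  unfolding dist_le_def by (rule exI[of _ "[x]"]) auto

lemma dist_le_mono: "dist_le E x y k \<Longrightarrow> k \<le> m \<Longrightarrow> dist_le E x y m"
  proof -
  assume a: "dist_le E x y k" "k \<le> m"
  then obtain p where "p \<noteq> []" "hd p = x" "last p = y" "length p \<le> k + 1"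
    "\<forall>i < length p - 1. {p ! i, p ! Suc i} \<in> E" unfolding dist_le_def by blast
  then show ?thesis unfolding dist_le_def using a(2) by (intro exI[of _ p]) auto
qed

lemma dist_le_step:
  assumes "dist_le E x y k" "{y, z} \<in> E"
  shows "dist_le E x z (Suc k)"
proof -
  obtain p where p: "p \<noteq> []" "hd p = x" "last p = y" "length p \<le> k + 1"
    "\<forall>i < length p - 1. {p ! i, p ! Suc i} \<in> E"
    using assms(1) unfolding dist_le_def by blast
  have "\<forall>i < length (p @ [z]) - 1. {(p @ [z]) ! i, (p @ [z]) ! Suc i} \<in> E"
  proof (intro allI impI)
    fix i assume i: "i < length (p @ [z]) - 1"
    show "{(p @ [z]) ! i, (p @ [z]) ! Suc i} \<in> E"
    proof (cases "i < length p - 1")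
      case True
      then show ?thesis using p(5) by (auto simp: nth_append)
    next
      case False
      then have "i = length p - 1" using i by auto
      then show ?thesis using p(1,3) assms(2)
        by (auto simp: nth_append last_conv_nth)
    qed
  qed
  then show ?thesis unfolding dist_le_def
    using p by (intro exI[of _ "p @ [z]"]) auto
qed

lemma dist_le_in_edge:
  assumes "simple_graph V E" "f \<in> E" "y \<in> f" "u \<in> f" "dist_le E x y k"
  shows "dist_le E x u (Suc k)"
proof (cases "u = y")
  case True then show ?thesis using assms(5) dist_le_mono by fastforce
next
  case False
  obtain a b where "f = {a, b}" using assms(1,2) unfolding simple_graph_def by blast
  then have "f = {y, u}" using assms(3,4) False by auto
  then show ?thesis using dist_le_step assms by metis
qed

lemma deg_minus: "(\<forall>f\<in>A. u \<notin> f) \<Longrightarrow> deg (E - A) u = deg E u"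
  unfolding deg_def by (rule arg_cong[where f=card]) auto

theorem lemma1:
  fixes V :: "'a set" and E S :: "'a set set"
  assumes "simple_graph V E"
    and "optimal_edge_irregulator E S"
  shows "\<forall>e\<in>S. \<exists>u v. {u, v} \<in> E \<and> deg E u = deg E v \<and>
            edge_dist_le E e {u, v} (2 * card S - 1)"
proof
  fix e assume eS: "e \<in> S"
  have SE: "S \<subseteq> E" and irr: "locally_irregular (E - S)"
    and opt: "\<And>S'. edge_irregulator E S' \<Longrightarrow> card S \<le> card S'"
    using assms(2) unfolding optimal_edge_irregulator_def edge_irregulator_def by auto
  have "E \<subseteq> Pow V" using assms(1) unfolding simple_graph_def by auto
  then have finE: "finite E" using assms(1) unfolding simple_graph_def
    by (meson finite_Pow_iff finite_subset)
  then have finS: "finite S" using SE finite_subset by blast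
  obtain a b where eab: "e = {a, b}" using assms(1) eS SE unfolding simple_graph_def by blast
  define T where "T j = {f\<in>S. \<exists>x\<in>e. \<exists>y\<in>f. dist_le E x y (2*j)}" for j
  have Tsub: "T j \<subseteq> S" for j unfolding T_def by auto
  have Tmono: "T j \<subseteq> T (Suc j)" for j
  proof
    fix f assume "f \<in> T j"
    then obtain x y where "f \<in> S" "x \<in> e" "y \<in> f" "dist_le E x y (2*j)" unfolding T_def by blast
    moreover have "dist_le E x y (2 * Suc j)" using dist_le_mono[OF \<open>dist_le E x y (2*j)\<close>] by simp
    ultimately show "f \<in> T (Suc j)" unfolding T_def by blast
  qed
  have eT: "e \<in> T 0" unfolding T_def using eS eab dist_le_refl by fastforce
  have "\<exists>j < card S. T (Suc j) \<subseteq> T j"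
  proof (rule ccontr)
    assume nt: "\<not> ?thesis"
    have strict: "T j \<subset> T (Suc j)" if "j < card S" for j
    proof -
      have "\<not> T (Suc j) \<subseteq> T j" using nt that by auto
      then show ?thesis using Tmono[of j] by (simp add: psubset_eq)
    qed
    have "j \<le> card S \<Longrightarrow> Suc j \<le> card (T j)" for j
    proof (induction j)
      case 0
      have "finite (T 0)" using finS Tsub[of 0] finite_subset by blast
      then have "card (T 0) > 0" using eT card_gt_0_iff by blast
      then show ?case by simp
    next
      case (Suc j)
      have "card (T j) < card (T (Suc j))"
        using strict[of j] Suc.prems finS Tsub[of "Suc j"]
        by (meson Suc_le_lessD finite_subset psubset_card_mono)
      then show ?case using Suc by simp
    qed
    from this[of "card S"] show False
      using card_mono[OF finS Tsub[of "card S"]] by simp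
  qed
  then obtain j where jS: "j < card S" and closed: "T (Suc j) \<subseteq> T j" by blast
  define S' where "S' = S - T j"
  have "T 0 \<subseteq> T j" using Tmono by (induction j) (auto intro: order_trans)
  then have "e \<in> T j" using eT by blast
  then have "S' \<subset> S" unfolding S'_def using eS by blast
  then have "card S' < card S" using finS psubset_card_mono by blast
  then have "\<not> edge_irregulator E S'" using opt by fastforce
  then have "\<not> locally_irregular (E - S')" unfolding edge_irregulator_def S'_def using SE by auto
  then obtain u v where uvE: "{u, v} \<in> E - S'" and uv: "u \<noteq> v"
    and degeq: "deg (E - S') u = deg (E - S') v"
    unfolding locally_irregular_def by blast
  have bound: "Suc (2*j) \<le> 2 * card S - 1" using jS by simp
  show "\<exists>u v. {u, v} \<in> E \<and> deg E u = deg E v \<and> edge_dist_le E e {u, v} (2 * card S - 1)"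
  proof (cases "\<exists>x\<in>e. dist_le E x u (Suc (2*j)) \<or> dist_le E x v (Suc (2*j))")
    case True
    then obtain x where xe: "x \<in> e" and
      near: "\<And>w. w \<in> {u, v} \<Longrightarrow> dist_le E x w (Suc (Suc (2*j)))"
    proof -
      from True obtain x where xe: "x \<in> e" and
        d: "dist_le E x u (Suc (2*j)) \<or> dist_le E x v (Suc (2*j))" by blast
      have "{u, v} \<in> E" "{v, u} \<in> E" using uvE by (auto simp: insert_commute)
      note E2 = this
      have "dist_le E x w (Suc (Suc (2*j)))" if "w \<in> {u, v}" for w
      proof -
        have w: "w = u \<or> w = v" using that by auto
        show ?thesis
        proof (cases "dist_le E x w (Suc (2*j))")
          case True then show ?thesis by (rule dist_le_mono) simp
        next
          case False
          then have "(w = u \<and> dist_le E x v (Suc (2*j))) \<or> (w = v \<and> dist_le E x u (Suc (2*j)))"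
            using d w by auto
          then show ?thesis
          proof (elim disjE conjE)
            assume "w = u" "dist_le E x v (Suc (2*j))"
            then show ?thesis using dist_le_step[OF _ E2(2)] by simp
          next
            assume "w = v" "dist_le E x u (Suc (2*j))"
            then show ?thesis using dist_le_step[OF _ E2(1)] by simp
          qed
        qed
      qed
      then show ?thesis using that xe by blast
    qed
    have noS': "\<forall>g\<in>S'. w \<notin> g" if "w \<in> {u, v}" for w
    proof
      fix g assume gS': "g \<in> S'"
      show "w \<notin> g"
      proof
        assume "w \<in> g"
        moreover have "g \<in> S" using gS' S'_def by simp
        moreover have "dist_le E x w (2 * Suc j)" using near[OF that] by simp
        ultimately have "g \<in> T (Suc j)" unfolding T_def using xe by blast
        then show False using closed gS' S'_def by auto
      qed
    qed
    have "deg E u = deg E v" using degeq deg_minus[OF noS'[of u]] deg_minus[OF noS'[of v]] by simp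
    moreover have "edge_dist_le E e {u, v} (2 * card S - 1)"
    proof -
      from True obtain x where xe: "x \<in> e" and
        d: "dist_le E x u (Suc (2*j)) \<or> dist_le E x v (Suc (2*j))" by blast
      then have "dist_le E x u (2 * card S - 1) \<or> dist_le E x v (2 * card S - 1)"
        using dist_le_mono[OF _ bound] by metis
      then show ?thesis unfolding edge_dist_le_def using xe by blast
    qed
    ultimately show ?thesis using uvE by blast
  next
    case False
    have noT: "\<forall>f\<in>T j. w \<notin> f" if "w \<in> {u, v}" for w
    proof
      fix f assume fT: "f \<in> T j"
      show "w \<notin> f"
      proof
        assume wf: "w \<in> f"
        obtain x y where "x \<in> e" "y \<in> f" "dist_le E x y (2*j)" "f \<in> S"
          using fT unfolding T_def by blast
        then have "dist_le E x w (Suc (2*j))"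
          using dist_le_in_edge[OF assms(1) _ _ wf] SE by blast
        then show False using False that \<open>x \<in> e\<close> by blast
      qed
    qed
    have ES: "E - S = (E - S') - T j" unfolding S'_def using Tsub by blast
    have "deg (E - S) u = deg (E - S) v"
      unfolding ES using degeq deg_minus[OF noT[of u]] deg_minus[OF noT[of v]] by simp
    moreover have "{u, v} \<notin> T j" using noT[of u] by auto
    then have "{u, v} \<in> E - S" using uvE S'_def by auto
    ultimately show ?thesis using irr uv unfolding locally_irregular_def by blast
  qed
qed

end
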